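(* Let $\alpha=\sqrt{a_{ij}y^iy^j}$ be a Riemannian metric and $\beta=b_iy^i$ a $1$-form on a manifold, $b:=\|\beta\|_\alpha$, and suppose $$b_{i|j}=\tau\left\{(1+k_1b^2)a_{ij}+(k_3+k_2b^2)b_ib_j\right\}$$ for some scalar function $\tau(x)$ and constants $k_1,k_2,k_3$. Let $\kappa,\rho,\nu$ be functions of $b^2$ with $1-\kappa b^2>0$ and $\nu$ nowhere zero, and define the $\beta$-deformations $$\bar\alpha=e^{\rho(b^2)}\sqrt{\alpha^2-\kappa(b^2)\beta^2},\qquad \bar\beta=\nu(b^2)\beta.$$ Then $\bar\beta$ is closed and conformal with respect to $\bar\alpha$ if and only if $$\nu=C\sqrt{1-b^2\kappa}\,e^{2\rho}\,e^{-\int\frac{k_3+k_2b^2}{2\{1+(k_1+k_3)b^2+k_2b^4\}}\,\mathrm{d}b^2}$$ for some non-zero constant $C$.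
   Context: $b_{i|j}$ denotes the covariant derivative of $\beta$ with respect to the Levi-Civita connection of $\alpha$. A $1$-form $\bar\beta=\bar b_iy^i$ is closed and conformal with respect to a Riemannian metric $\bar\alpha=\sqrt{\bar a_{ij}y^iy^j}$ if $\bar b_{i|j}=c(x)\bar a_{ij}$ for some function $c$, where the covariant derivative is taken with respect to $\bar\alpha$. The integral denotes an antiderivative in the variable $b^2$. *)

theory Defs
  imports "HOL-Analysis.Analysis"
begin

text \<open>Local (chart) setting: an open connected set U in R^n, n = CARD('n).
  Tensors are given by their components in the coordinate frame.\<close>

text \<open>Partial derivative of a scalar function along the k-th coordinate axis.\<close>
definition partial :: "'n::finite \<Rightarrow> (real^'n \<Rightarrow> real) \<Rightarrow> real^'n \<Rightarrow> real" where
  "partial k f x = deriv (\<lambda>t. f (x + t *\<^sub>R axis k 1)) 0"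

text \<open>C^m regularity of a scalar function on a set, and smoothness (C^infinity).\<close>
fun Ck_on :: "nat \<Rightarrow> (real^'n::finite) set \<Rightarrow> (real^'n \<Rightarrow> real) \<Rightarrow> bool" where
  "Ck_on 0 U f = continuous_on U f"
| "Ck_on (Suc m) U f = (f differentiable_on U \<and> (\<forall>k. Ck_on m U (partial k f)))"

definition smooth_on :: "(real^'n::finite) set \<Rightarrow> (real^'n \<Rightarrow> real) \<Rightarrow> bool" where
  "smooth_on U f \<longleftrightarrow> (\<forall>m. Ck_on m U f)"

text \<open>Smoothness of a real function of one real variable on a set.\<close>
definition smooth_real_on :: "real set \<Rightarrow> (real \<Rightarrow> real) \<Rightarrow> bool" where
  "smooth_real_on S f \<longleftrightarrow> (\<forall>m. ((deriv ^^ m) f) differentiable_on S)"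

text \<open>Riemannian metric (components a_ij) on U: symmetric, positive definite, smooth.\<close>
definition riemannian_on :: "(real^'n::finite) set \<Rightarrow> (real^'n \<Rightarrow> real^'n^'n) \<Rightarrow> bool" where
  "riemannian_on U g \<longleftrightarrow>
     (\<forall>i j. smooth_on U (\<lambda>x. g x $ i $ j)) \<and>
     (\<forall>x\<in>U. transpose (g x) = g x \<and> (\<forall>v. v \<noteq> 0 \<longrightarrow> v \<bullet> (g x *v v) > 0))"

text \<open>Christoffel symbols Gamma^k_ij of the Levi-Civita connection.\<close>
definition christoffel :: "(real^'n::finite \<Rightarrow> real^'n^'n) \<Rightarrow> real^'n \<Rightarrow> 'n \<Rightarrow> 'n \<Rightarrow> 'n \<Rightarrow> real" where
  "christoffel g x k i j =
     (1/2) * (\<Sum>l\<in>UNIV. matrix_inv (g x) $ k $ l *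
        (partial i (\<lambda>y. g y $ l $ j) x + partial j (\<lambda>y. g y $ l $ i) x
         - partial l (\<lambda>y. g y $ i $ j) x))"

text \<open>Covariant derivative b_{i|j} of the 1-form with components b_i w.r.t. g.\<close>
definition cov_deriv :: "(real^'n::finite \<Rightarrow> real^'n^'n) \<Rightarrow> (real^'n \<Rightarrow> real^'n) \<Rightarrow> real^'n \<Rightarrow> 'n \<Rightarrow> 'n \<Rightarrow> real" where
  "cov_deriv g b x i j = partial j (\<lambda>y. b y $ i) x - (\<Sum>k\<in>UNIV. christoffel g x k i j * b x $ k)"

text \<open>Squared norm b^2 = a^{ij} b_i b_j.\<close>
definition sqnorm :: "(real^'n::finite \<Rightarrow> real^'n^'n) \<Rightarrow> (real^'n \<Rightarrow> real^'n) \<Rightarrow> real^'n \<Rightarrow> real" where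
  "sqnorm g b x = b x \<bullet> (matrix_inv (g x) *v b x)"

text \<open>Closed and conformal: b_{i|j} = c(x) a_ij for some function c.\<close>
definition closed_conformal_on :: "(real^'n::finite) set \<Rightarrow> (real^'n \<Rightarrow> real^'n^'n) \<Rightarrow> (real^'n \<Rightarrow> real^'n) \<Rightarrow> bool" where
  "closed_conformal_on U g b \<longleftrightarrow>
     (\<exists>c::real^'n \<Rightarrow> real. \<forall>x\<in>U. \<forall>i j. cov_deriv g b x i j = c x * g x $ i $ j)"

text \<open>beta-deformations.\<close>
definition deformed_metric :: "(real \<Rightarrow> real) \<Rightarrow> (real \<Rightarrow> real) \<Rightarrow> (real^'n::finite \<Rightarrow> real^'n^'n) \<Rightarrow> (real^'n \<Rightarrow> real^'n) \<Rightarrow> real^'n \<Rightarrow> real^'n^'n" where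
  "deformed_metric \<rho> \<kappa> g b x =
     (\<chi> i j. exp (2 * \<rho> (sqnorm g b x)) * (g x $ i $ j - \<kappa> (sqnorm g b x) * (b x $ i) * (b x $ j)))"

definition deformed_form :: "(real \<Rightarrow> real) \<Rightarrow> (real^'n::finite \<Rightarrow> real^'n^'n) \<Rightarrow> (real^'n \<Rightarrow> real^'n) \<Rightarrow> real^'n \<Rightarrow> real^'n" where
  "deformed_form \<nu> g b x = \<nu> (sqnorm g b x) *\<^sub>R b x"

end

theory Submission
  imports Defs
begin


lemma partial_hd:
  fixes f :: "real^'n::finite \<Rightarrow> real"
  assumes "(f has_derivative f') (at x)"
  shows "partial k f x = f' (axis k 1)"
proof -
  have l: "bounded_linear f'" using assms has_derivative_bounded_linear by blast
  have "((\<lambda>t::real. x + t *\<^sub>R axis k 1) has_derivative (\<lambda>t. t *\<^sub>R axis k 1)) (at 0)"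
    by (auto intro!: derivative_eq_intros)
  moreover have "(f has_derivative f') (at (x + 0 *\<^sub>R axis k 1))" using assms by simp
  ultimately have "((\<lambda>t. f (x + t *\<^sub>R axis k 1)) has_derivative (\<lambda>t. f' (t *\<^sub>R axis k 1))) (at 0)"
    using has_derivative_compose[of "\<lambda>t::real. x + t *\<^sub>R axis k 1" _ 0 UNIV f f'] by (simp add: o_def)
  moreover have "(\<lambda>t. f' (t *\<^sub>R axis k 1)) = (*) (f' (axis k 1))"
    using l by (auto simp: linear_simps(5) fun_eq_iff mult.commute)
  ultimately have "((\<lambda>t. f (x + t *\<^sub>R axis k 1)) has_real_derivative f' (axis k 1)) (at 0)"
    by (simp add: has_field_derivative_def)
  then show ?thesis unfolding partial_def by (rule DERIV_imp_deriv)
qed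

lemma partial_diff_ex:
  fixes f :: "real^'n::finite \<Rightarrow> real"
  assumes "f differentiable (at x)"
  obtains f' where "(f has_derivative f') (at x)" "\<And>k. partial k f x = f' (axis k 1)"
  using assms partial_hd unfolding differentiable_def by blast

lemma partial_add:
  fixes f g :: "real^'n::finite \<Rightarrow> real"
  assumes "f differentiable (at x)" "g differentiable (at x)"
  shows "partial k (\<lambda>y. f y + g y) x = partial k f x + partial k g x"
proof -
  obtain f' g' where "(f has_derivative f') (at x)" "(g has_derivative g') (at x)"
    using assms unfolding differentiable_def by blast
  then show ?thesis
    by (metis (no_types) has_derivative_add partial_hd)
qed

lemma partial_diff:
  fixes f g :: "real^'n::finite \<Rightarrow> real"
  assumes "f differentiable (at x)" "g differentiable (at x)"
  shows "partial k (\<lambda>y. f y - g y) x = partial k f x - partial k g x"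
proof -
  obtain f' g' where "(f has_derivative f') (at x)" "(g has_derivative g') (at x)"
    using assms unfolding differentiable_def by blast
  then show ?thesis
    by (metis (no_types) has_derivative_diff partial_hd)
qed

lemma partial_mult:
  fixes f g :: "real^'n::finite \<Rightarrow> real"
  assumes "f differentiable (at x)" "g differentiable (at x)"
  shows "partial k (\<lambda>y. f y * g y) x = partial k f x * g x + f x * partial k g x"
proof -
  obtain f' g' where f: "(f has_derivative f') (at x)" and g: "(g has_derivative g') (at x)"
    using assms unfolding differentiable_def by blast
  have "((\<lambda>y. f y * g y) has_derivative (\<lambda>h. f x * g' h + f' h * g x)) (at x)"
    using has_derivative_mult[OF f g] by simp
  then show ?thesis using partial_hd[OF f] partial_hd[OF g] partial_hd
    by (metis add.commute mult.commute)
qed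

lemma partial_const: "partial k (\<lambda>y::real^'n::finite. c::real) x = 0"
  using partial_hd[of "\<lambda>y. c" "\<lambda>h. 0" x k] by simp

lemma partial_cmult:
  fixes f :: "real^'n::finite \<Rightarrow> real"
  assumes "f differentiable (at x)"
  shows "partial k (\<lambda>y. c * f y) x = c * partial k f x"
  using partial_mult[of "\<lambda>y. c" x f k] assms partial_const[of k c x] by simp

lemma partial_sum:
  fixes f :: "'i \<Rightarrow> real^'n::finite \<Rightarrow> real"
  assumes "finite S" "\<And>i. i \<in> S \<Longrightarrow> f i differentiable (at x)"
  shows "partial k (\<lambda>y. \<Sum>i\<in>S. f i y) x = (\<Sum>i\<in>S. partial k (f i) x)"
  using assms
proof (induction S rule: finite_induct)
  case empty then show ?case by (simp add: partial_const)
next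
  case (insert a F)
  have "partial k (\<lambda>y. \<Sum>i\<in>insert a F. f i y) x = partial k (\<lambda>y. f a y + (\<Sum>i\<in>F. f i y)) x"
    using insert by simp
  also have "\<dots> = partial k (f a) x + partial k (\<lambda>y. \<Sum>i\<in>F. f i y) x"
    using insert by (intro partial_add) (auto intro!: differentiable_sum)
  finally show ?case using insert by simp
qed

lemma partial_comp:
  fixes f :: "real^'n::finite \<Rightarrow> real"
  assumes "f differentiable (at x)" "(h has_real_derivative h') (at (f x))"
  shows "partial k (\<lambda>y. h (f y)) x = h' * partial k f x"
proof -
  obtain f' where f: "(f has_derivative f') (at x)"
    using assms unfolding differentiable_def by blast
  have "((\<lambda>y. h (f y)) has_derivative (\<lambda>v. h' * f' v)) (at x)"
    using has_derivative_compose[OF f, of h "(*) h'"] assms(2)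
    by (simp add: has_field_derivative_def o_def)
  then show ?thesis using partial_hd[OF f] partial_hd by metis
qed

lemma partial_cong:
  fixes f g :: "real^'n::finite \<Rightarrow> real"
  assumes "open U" "x \<in> U" "\<And>y. y \<in> U \<Longrightarrow> f y = g y"
  shows "partial k f x = partial k g x"
proof -
  have "open ((\<lambda>t::real. x + t *\<^sub>R axis k 1) -` U)"
    by (intro open_vimage assms continuous_intros)
  moreover have "0 \<in> (\<lambda>t::real. x + t *\<^sub>R axis k 1) -` U" using assms by simp
  ultimately have "\<forall>\<^sub>F t in nhds 0. (x + t *\<^sub>R axis k 1) \<in> U"
    using eventually_nhds by blast
  then have "\<forall>\<^sub>F t in nhds 0. f (x + t *\<^sub>R axis k 1) = g (x + t *\<^sub>R axis k 1)"
    by eventually_elim (use assms in auto)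
  then show ?thesis unfolding partial_def by (rule deriv_cong_ev) simp
qed

lemma diff_cong:
  fixes f g :: "real^'n::finite \<Rightarrow> 'b::real_normed_vector"
  assumes "open U" "x \<in> U" "\<And>y. y \<in> U \<Longrightarrow> f y = g y" "f differentiable (at x)"
  shows "g differentiable (at x)"
  using assms has_derivative_transform_within_open unfolding differentiable_def by blast

lemma smooth_diff:
  assumes "smooth_on U f" "open U" "x \<in> U"
  shows "f differentiable (at x)"
proof -
  have "Ck_on (Suc 0) U f" using assms unfolding smooth_on_def by blast
  then have "f differentiable_on U" by simp
  then show ?thesis using assms differentiable_on_eq_differentiable_at by blast
qed

lemma smooth_real_deriv:
  assumes "smooth_real_on I f" "open I" "t \<in> I"
  shows "(f has_real_derivative deriv f t) (at t)"
proof -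
  have "((deriv ^^ 0) f) differentiable_on I" using assms unfolding smooth_real_on_def by blast
  then have "f differentiable (at t)" using assms differentiable_on_eq_differentiable_at by auto
  then show ?thesis using DERIV_deriv_iff_real_differentiable by blast
qed

lemma differentiable_prod':
  fixes f :: "'i \<Rightarrow> real^'n::finite \<Rightarrow> real"
  assumes "finite S" "\<And>i. i \<in> S \<Longrightarrow> f i differentiable (at x)"
  shows "(\<lambda>y. \<Prod>i\<in>S. f i y) differentiable (at x)"
  using assms
proof (induction S rule: finite_induct)
  case empty then show ?case by simp
next
  case (insert a F)
  then have "(\<lambda>y. f a y * (\<Prod>i\<in>F. f i y)) differentiable (at x)"
    by (intro differentiable_mult) auto
  then show ?case using insert by simp
qed

lemma det_differentiable:
  fixes M :: "real^'n::finite \<Rightarrow> real^'m::finite^'m"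
  assumes "\<And>i j. (\<lambda>y. M y $ i $ j) differentiable (at x)"
  shows "(\<lambda>y. det (M y)) differentiable (at x)"
  unfolding det_def
  by (intro differentiable_sum ballI differentiable_mult differentiable_const differentiable_prod' assms) auto



lemma minv_right:
  fixes A :: "real^'n::finite^'n"
  assumes "invertible A" shows "A ** matrix_inv A = mat 1" "matrix_inv A ** A = mat 1"
proof -
  have "\<exists>A'. A ** A' = mat 1 \<and> A' ** A = mat 1" using assms unfolding invertible_def by blast
  then have "A ** matrix_inv A = mat 1 \<and> matrix_inv A ** A = mat 1"
    unfolding matrix_inv_def by (rule someI_ex)
  then show "A ** matrix_inv A = mat 1" "matrix_inv A ** A = mat 1" by auto
qed

lemma minv_solve:
  fixes A :: "real^'n::finite^'n"
  assumes "invertible A" "A *v w = c" shows "matrix_inv A *v c = w"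
  using assms minv_right(2)[OF assms(1)]
  by (metis matrix_vector_mul_assoc matrix_vector_mul_lid)

lemma minv_contract:
  fixes A M :: "real^'n::finite^'n"
  assumes "transpose A = A" "A ** M = mat 1" "A *v w = c"
  shows "(\<Sum>k\<in>UNIV. M $ k $ l * c $ k) = w $ l"
proof -
  have "transpose M ** A = mat 1"
    using assms by (metis matrix_transpose_mul transpose_mat)
  then have "transpose M *v c = w"
    using assms(3) by (metis matrix_vector_mul_assoc matrix_vector_mul_lid)
  then have "(transpose M *v c) $ l = w $ l" by simp
  then show ?thesis
    by (simp add: matrix_vector_mult_def transpose_def mult.commute)
qed

lemma inj_invertible:
  fixes A :: "real^'n::finite^'n"
  assumes "\<And>v. A *v v = 0 \<Longrightarrow> v = 0"
  shows "invertible A"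
proof -
  have "linear ((*v) A)" by (simp add: matrix_vector_mul_linear)
  then have "inj ((*v) A)" using assms linear_injective_0 by blast
  then have "det (matrix ((*v) A)) \<noteq> 0"
    using det_nz_iff_inj \<open>linear ((*v) A)\<close> by blast
  then show ?thesis by (simp add: invertible_det_nz matrix_of_matrix_vector_mul)
qed

lemma pd_invertible:
  fixes A :: "real^'n::finite^'n"
  assumes "\<forall>v. v \<noteq> 0 \<longrightarrow> v \<bullet> (A *v v) > 0"
  shows "invertible A"
  by (rule inj_invertible) (metis assms inner_zero_right less_irrefl)

lemma mv_nth: "(A *v v) $ i = (\<Sum>j\<in>UNIV. A $ i $ j * v $ j)"
  by (simp add: matrix_vector_mult_def)

lemma inner_sum: "(u::real^'n::finite) \<bullet> w = (\<Sum>i\<in>UNIV. u $ i * w $ i)"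
  by (simp add: inner_vec_def)

text \<open>cov_deriv expanded via a solution w of g w = b.\<close>
lemma cov_expand:
  fixes g :: "real^'n::finite \<Rightarrow> real^'n^'n" and bf :: "real^'n \<Rightarrow> real^'n"
  assumes "transpose (g x) = g x" "invertible (g x)" "g x *v w = bf x"
  shows "cov_deriv g bf x i j = partial j (\<lambda>y. bf y $ i) x
     - (1/2) * (\<Sum>l\<in>UNIV. w $ l * (partial i (\<lambda>y. g y $ l $ j) x + partial j (\<lambda>y. g y $ l $ i) x
         - partial l (\<lambda>y. g y $ i $ j) x))"
proof -
  let ?G = "\<lambda>l. partial i (\<lambda>y. g y $ l $ j) x + partial j (\<lambda>y. g y $ l $ i) x
         - partial l (\<lambda>y. g y $ i $ j) x"
  have c: "\<And>l. (\<Sum>k\<in>UNIV. matrix_inv (g x) $ k $ l * bf x $ k) = w $ l"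
    using minv_contract[OF assms(1) minv_right(1)[OF assms(2)] assms(3)] .
  have "(\<Sum>k\<in>UNIV. christoffel g x k i j * bf x $ k)
      = (\<Sum>k\<in>UNIV. \<Sum>l\<in>UNIV. (1/2) * (matrix_inv (g x) $ k $ l * bf x $ k) * ?G l)"
    unfolding christoffel_def by (simp add: sum_distrib_left sum_distrib_right algebra_simps)
  also have "\<dots> = (\<Sum>l\<in>UNIV. \<Sum>k\<in>UNIV. (1/2) * (matrix_inv (g x) $ k $ l * bf x $ k) * ?G l)"
    by (rule sum.swap)
  also have "\<dots> = (\<Sum>l\<in>UNIV. (1/2) * (\<Sum>k\<in>UNIV. matrix_inv (g x) $ k $ l * bf x $ k) * ?G l)"
    by (simp add: sum_distrib_left sum_distrib_right)
  also have "\<dots> = (1/2) * (\<Sum>l\<in>UNIV. w $ l * ?G l)"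
    by (simp add: c sum_distrib_left mult.assoc)
  finally show ?thesis unfolding cov_deriv_def by simp
qed


context
  fixes U :: "(real^'n::finite) set"
    and a :: "real^'n \<Rightarrow> real^'n^'n"
    and b :: "real^'n \<Rightarrow> real^'n"
  assumes U: "open U"
    and a: "riemannian_on U a"
    and b_smooth: "\<forall>i. smooth_on U (\<lambda>x. b x $ i)"
begin

lemma a_sym0: "x \<in> U \<Longrightarrow> transpose (a x) = a x"
  using a unfolding riemannian_on_def by auto

lemma a_sym_p0: "x \<in> U \<Longrightarrow> a x $ i $ j = a x $ j $ i"
proof -
  assume "x \<in> U"
  then have "transpose (a x) $ i $ j = a x $ i $ j" using a_sym0 by simp
  then show ?thesis by (simp add: transpose_def)
qed

lemma a_inv0: "x \<in> U \<Longrightarrow> invertible (a x)"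
proof -
  assume "x \<in> U"
  then have "\<forall>v. v \<noteq> 0 \<longrightarrow> v \<bullet> (a x *v v) > 0" using a unfolding riemannian_on_def by blast
  then show ?thesis by (rule pd_invertible)
qed

lemma a_diff0: "x \<in> U \<Longrightarrow> (\<lambda>y. a y $ i $ j) differentiable (at x)"
proof -
  assume "x \<in> U"
  moreover have "smooth_on U (\<lambda>y. a y $ i $ j)" using a unfolding riemannian_on_def by blast
  ultimately show ?thesis using U smooth_diff by blast
qed

lemma b_diff0: "x \<in> U \<Longrightarrow> (\<lambda>y. b y $ i) differentiable (at x)"
  using b_smooth U smooth_diff by blast
definition vf :: "real^'n \<Rightarrow> real^'n" where
  "vf y = matrix_inv (a y) *v b y"

lemma vf_eq0: "y \<in> U \<Longrightarrow> a y *v vf y = b y"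
proof -
  assume "y \<in> U"
  then have "a y ** matrix_inv (a y) = mat 1" using a_inv0 minv_right(1) by blast
  then show ?thesis unfolding vf_def by (simp add: matrix_vector_mul_assoc)
qed

lemma vf_cramer: "y \<in> U \<Longrightarrow>
   vf y $ k = det (\<chi> i j. if j = k then b y $ i else a y $ i $ j) / det (a y)"
proof -
  assume y: "y \<in> U"
  have "det (a y) \<noteq> 0" using a_inv0[OF y] invertible_det_nz by blast
  then have "vf y = (\<chi> k. det (\<chi> i j. if j = k then b y $ i else a y $ i $ j) / det (a y))"
    using cramer vf_eq0[OF y] by blast
  then show ?thesis by simp
qed

lemma vf_diff: "x \<in> U \<Longrightarrow> (\<lambda>y. vf y $ k) differentiable (at x)"
proof -
  assume x: "x \<in> U"
  have "det (a x) \<noteq> 0" using a_inv0[OF x] invertible_det_nz by blast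
  have "\<And>i j. (\<lambda>y. (\<chi> i j. if j = k then b y $ i else a y $ i $ j) $ i $ j) differentiable (at x)"
  proof -
    fix i j
    show "(\<lambda>y. (\<chi> i j. if j = k then b y $ i else a y $ i $ j) $ i $ j) differentiable (at x)"
      using b_diff0[OF x] a_diff0[OF x] by (cases "j = k") simp_all
  qed
  then have "(\<lambda>y. det (\<chi> i j. if j = k then b y $ i else a y $ i $ j)) differentiable (at x)"
    by (rule det_differentiable)
  moreover have "(\<lambda>y. det (a y)) differentiable (at x)"
    using a_diff0[OF x] by (rule det_differentiable)
  ultimately have "(\<lambda>y. det (\<chi> i j. if j = k then b y $ i else a y $ i $ j) / det (a y)) differentiable (at x)"
    using \<open>det (a x) \<noteq> 0\<close> by (rule differentiable_divide)
  then show ?thesis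
    using diff_cong[OF U x, of "\<lambda>y. det (\<chi> i j. if j = k then b y $ i else a y $ i $ j) / det (a y)"
        "\<lambda>y. vf y $ k"] vf_cramer by simp
qed

lemma sq_eq0: "sqnorm a b y = (\<Sum>i\<in>UNIV. b y $ i * vf y $ i)"
  unfolding sqnorm_def vf_def by (simp add: inner_sum)

lemma sq_diff0: "x \<in> U \<Longrightarrow> sqnorm a b differentiable (at x)"
proof -
  assume x: "x \<in> U"
  have "(\<lambda>y. \<Sum>i\<in>UNIV. b y $ i * vf y $ i) differentiable (at x)"
    by (rule differentiable_sum) (auto intro!: differentiable_mult b_diff0[OF x] vf_diff[OF x])
  then show ?thesis by (simp add: sq_eq0[abs_def])
qed

lemma cov_a0: "x \<in> U \<Longrightarrow> cov_deriv a b x i j = partial j (\<lambda>y. b y $ i) x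
     - (1/2) * (\<Sum>l\<in>UNIV. vf x $ l * (partial i (\<lambda>y. a y $ l $ j) x + partial j (\<lambda>y. a y $ l $ i) x
         - partial l (\<lambda>y. a y $ i $ j) x))"
proof -
  assume x: "x \<in> U"
  show ?thesis by (rule cov_expand[of a x "vf x" b, OF a_sym0[OF x] a_inv0[OF x] vf_eq0[OF x]])
qed

lemma da_sym0: "x \<in> U \<Longrightarrow> partial k (\<lambda>y. a y $ i $ j) x = partial k (\<lambda>y. a y $ j $ i) x"
proof -
  assume x: "x \<in> U"
  show ?thesis by (rule partial_cong[OF U x]) (rule a_sym_p0)
qed

lemma ds_formula0: assumes x: "x \<in> U"
  shows "partial k (sqnorm a b) x = 2 * (\<Sum>i\<in>UNIV. vf x $ i * cov_deriv a b x i k)"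
proof -
  define v where "v = vf x"
  define da where "da = (\<lambda>k i j. partial k (\<lambda>y. a y $ i $ j) x)"
  define db where "db = (\<lambda>k i. partial k (\<lambda>y. b y $ i) x)"
  define dv where "dv = (\<lambda>k i. partial k (\<lambda>y. vf y $ i) x)"
  have e1: "(\<Sum>j\<in>UNIV. da k i j * v $ j + a x $ i $ j * dv k j) = db k i" for i
  proof -
    have "partial k (\<lambda>y. \<Sum>j\<in>UNIV. a y $ i $ j * vf y $ j) x = partial k (\<lambda>y. b y $ i) x"
    proof (rule partial_cong[OF U x])
      fix y assume "y \<in> U"
      then show "(\<Sum>j\<in>UNIV. a y $ i $ j * vf y $ j) = b y $ i"
        using vf_eq0 mv_nth by metis
    qed
    moreover have "partial k (\<lambda>y. \<Sum>j\<in>UNIV. a y $ i $ j * vf y $ j) x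
        = (\<Sum>j\<in>UNIV. partial k (\<lambda>y. a y $ i $ j * vf y $ j) x)"
      by (rule partial_sum) (auto intro!: differentiable_mult a_diff0[OF x] vf_diff[OF x])
    moreover have "partial k (\<lambda>y. a y $ i $ j * vf y $ j) x = da k i j * v $ j + a x $ i $ j * dv k j" for j
      unfolding da_def dv_def v_def by (rule partial_mult[OF a_diff0[OF x] vf_diff[OF x]])
    ultimately show ?thesis unfolding db_def by simp
  qed
  have ds: "partial k (sqnorm a b) x = (\<Sum>i\<in>UNIV. db k i * v $ i + b x $ i * dv k i)"
  proof -
    have "partial k (sqnorm a b) x = partial k (\<lambda>y. \<Sum>i\<in>UNIV. b y $ i * vf y $ i) x"
      by (simp add: sq_eq0[abs_def])
    also have "\<dots> = (\<Sum>i\<in>UNIV. partial k (\<lambda>y. b y $ i * vf y $ i) x)"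
      by (rule partial_sum) (auto intro!: differentiable_mult b_diff0[OF x] vf_diff[OF x])
    also have "\<dots> = (\<Sum>i\<in>UNIV. db k i * v $ i + b x $ i * dv k i)"
      unfolding db_def dv_def v_def by (rule sum.cong[OF refl], rule partial_mult[OF b_diff0[OF x] vf_diff[OF x]])
    finally show ?thesis .
  qed
  have bv: "b x $ i = (\<Sum>j\<in>UNIV. a x $ i $ j * v $ j)" for i
    using vf_eq0[OF x] mv_nth unfolding v_def by metis
  have "(\<Sum>i\<in>UNIV. b x $ i * dv k i) = (\<Sum>i\<in>UNIV. \<Sum>j\<in>UNIV. v $ j * (a x $ j $ i * dv k i))"
  proof (rule sum.cong[OF refl])
    fix i
    show "b x $ i * dv k i = (\<Sum>j\<in>UNIV. v $ j * (a x $ j $ i * dv k i))"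
      unfolding bv sum_distrib_right by (rule sum.cong[OF refl]) (simp add: a_sym_p0[OF x, of i])
  qed
  also have "\<dots> = (\<Sum>j\<in>UNIV. \<Sum>i\<in>UNIV. v $ j * (a x $ j $ i * dv k i))"
    by (rule sum.swap)
  also have "\<dots> = (\<Sum>j\<in>UNIV. v $ j * (\<Sum>i\<in>UNIV. a x $ j $ i * dv k i))"
    by (simp only: sum_distrib_left)
  also have "\<dots> = (\<Sum>j\<in>UNIV. v $ j * (db k j - (\<Sum>i\<in>UNIV. da k j i * v $ i)))"
  proof (rule sum.cong[OF refl])
    fix j
    have "(\<Sum>i\<in>UNIV. a x $ j $ i * dv k i) = db k j - (\<Sum>i\<in>UNIV. da k j i * v $ i)"
      using e1[of j] by (simp add: sum.distrib)
    then show "v $ j * (\<Sum>i\<in>UNIV. a x $ j $ i * dv k i) = v $ j * (db k j - (\<Sum>i\<in>UNIV. da k j i * v $ i))"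
      by simp
  qed
  also have "\<dots> = (\<Sum>j\<in>UNIV. v $ j * db k j) - (\<Sum>j\<in>UNIV. \<Sum>i\<in>UNIV. v $ j * v $ i * da k j i)"
    by (simp add: right_diff_distrib sum_subtractf sum_distrib_left mult_ac)
  finally have t1: "(\<Sum>i\<in>UNIV. b x $ i * dv k i) =
      (\<Sum>j\<in>UNIV. v $ j * db k j) - (\<Sum>j\<in>UNIV. \<Sum>i\<in>UNIV. v $ j * v $ i * da k j i)" .
  have cov: "cov_deriv a b x i k = db k i - (1/2) * (\<Sum>l\<in>UNIV. v $ l *
       (da i l k + da k l i - da l i k))" for i
    unfolding da_def db_def v_def using cov_a0[OF x] by simp
  have sw: "(\<Sum>i\<in>UNIV. \<Sum>l\<in>UNIV. v $ i * (v $ l * da l i k))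
         = (\<Sum>i\<in>UNIV. \<Sum>l\<in>UNIV. v $ i * (v $ l * da i l k))"
    by (subst sum.swap) (simp add: mult_ac)
  have ex: "v $ i * cov_deriv a b x i k = v $ i * db k i - (1/2) * ((\<Sum>l\<in>UNIV. v $ i * (v $ l * da i l k))
        + (\<Sum>l\<in>UNIV. v $ i * (v $ l * da k l i)) - (\<Sum>l\<in>UNIV. v $ i * (v $ l * da l i k)))" for i
    unfolding cov by (simp add: algebra_simps sum_subtractf sum.distrib sum_distrib_left)
  have "(\<Sum>i\<in>UNIV. v $ i * cov_deriv a b x i k)
     = (\<Sum>i\<in>UNIV. v $ i * db k i) - (1/2) * ((\<Sum>i\<in>UNIV. \<Sum>l\<in>UNIV. v $ i * (v $ l * da i l k))
        + (\<Sum>i\<in>UNIV. \<Sum>l\<in>UNIV. v $ i * (v $ l * da k l i)) - (\<Sum>i\<in>UNIV. \<Sum>l\<in>UNIV. v $ i * (v $ l * da l i k)))"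
    unfolding ex by (simp only: sum_subtractf sum.distrib sum_distrib_left[symmetric])
  also have "\<dots> = (\<Sum>i\<in>UNIV. v $ i * db k i) - (1/2) * (\<Sum>j\<in>UNIV. \<Sum>i\<in>UNIV. v $ j * v $ i * da k j i)"
  proof -
    have sy: "da k l i = da k i l" for l i unfolding da_def by (rule da_sym0[OF x])
    have "(\<Sum>i\<in>UNIV. \<Sum>l\<in>UNIV. v $ i * (v $ l * da k l i)) = (\<Sum>j\<in>UNIV. \<Sum>i\<in>UNIV. v $ j * v $ i * da k j i)"
      by (intro sum.cong refl) (simp only: sy mult.assoc)
    then show ?thesis using sw by simp
  qed
  finally have "(\<Sum>i\<in>UNIV. v $ i * cov_deriv a b x i k)
     = (\<Sum>i\<in>UNIV. v $ i * db k i) - (1/2) * (\<Sum>j\<in>UNIV. \<Sum>i\<in>UNIV. v $ j * v $ i * da k j i)" .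
  moreover have "(\<Sum>i\<in>UNIV. db k i * v $ i + b x $ i * dv k i) = (\<Sum>i\<in>UNIV. v $ i * db k i) + (\<Sum>i\<in>UNIV. b x $ i * dv k i)"
    by (simp add: sum.distrib mult.commute)
  ultimately show ?thesis using ds t1 unfolding v_def by simp
qed

end


lemma diff_comp_real:
  fixes f :: "real^'n::finite \<Rightarrow> real"
  assumes "f differentiable (at x)" "(h has_real_derivative h') (at (f x))"
  shows "(\<lambda>y. h (f y)) differentiable (at x)"
proof -
  obtain f' where f: "(f has_derivative f') (at x)"
    using assms unfolding differentiable_def by blast
  have "((\<lambda>y. h (f y)) has_derivative (\<lambda>v. h' * f' v)) (at x)"
    using has_derivative_compose[OF f, of h "(*) h'"] assms(2)
    by (simp add: has_field_derivative_def o_def)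
  then show ?thesis unfolding differentiable_def by blast
qed

lemma alg_summand:
  fixes l0 wl p r1 t D k k1 bi bj bl alj ali aij dailj dajli dalij dbli dblj dbij dbji :: real
  shows "(l0 * wl) * ((p * (2 * r1) * (2 * t * D * bi) * (alj - k * bl * bj) + p * (dailj - ((k1 * (2 * t * D * bi) * bl + k * dbli) * bj + k * bl * dbij)))
           + (p * (2 * r1) * (2 * t * D * bj) * (ali - k * bl * bi) + p * (dajli - ((k1 * (2 * t * D * bj) * bl + k * dblj) * bi + k * bl * dbji)))
           - (p * (2 * r1) * (2 * t * D * bl) * (aij - k * bi * bj) + p * (dalij - ((k1 * (2 * t * D * bl) * bi + k * dbli) * bj + k * bi * dblj))))
   = (l0 * p * 2 * r1 * 2 * t * D * bi) * (wl * alj) + (l0 * p * 2 * r1 * 2 * t * D * bj) * (wl * ali)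
     + (l0 * (-(p * 2 * r1 * 2 * t * D * k * bi * bj) - p * 2 * r1 * 2 * t * D * k * bj * bi - p * 2 * r1 * 2 * t * D * (aij - k * bi * bj)
            - p * k1 * 2 * t * D * bi * bj - p * k * (dbij + dbji))) * (wl * bl)
     + (l0 * p) * (wl * (dailj + dajli - dalij))"
  by algebra

lemma alg_final0:
  fixes nu1 p r1 k k1 t Aa B ss bi bj aij SA l0 :: real
  shows "nu1 * (2 * t * (Aa + ss * B) * bj) * bi + (l0 * (p * (1-k * ss))) * (t * (Aa * aij + B * bi * bj) + SA/2) - 1/2 * (
        (l0 * p * 2 * r1 * 2 * t * (Aa + ss * B) * bi) * bj + (l0 * p * 2 * r1 * 2 * t * (Aa + ss * B) * bj) * bi
     + (l0 * (-(p * 2 * r1 * 2 * t * (Aa + ss * B) * k * bi * bj) - p * 2 * r1 * 2 * t * (Aa + ss * B) * k * bj * bi - p * 2 * r1 * 2 * t * (Aa + ss * B) * (aij - k * bi * bj)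
            - p * k1 * 2 * t * (Aa + ss * B) * bi * bj - p * k * ((t * (Aa * aij + B * bi * bj) + SA/2) + (t * (Aa * aij + B * bi * bj) + SA/2)))) * ss
     + (l0 * p) * SA)
   = (t * ((l0 * (p * (1-k * ss))) * Aa + l0 * 2 * r1 * p * (Aa + ss * B) * ss + l0 * k * p * ss * Aa)) * (aij - k * bi * bj)
     + t * (2 * (Aa + ss * B) * nu1 - 4 * (Aa + ss * B) * (l0 * (p * (1-k * ss))) * r1 + l0 * p * (Aa + ss * B) * (ss * k1+k) + (l0 * (p * (1-k * ss))) * B) * bi * bj"
  by (simp add: algebra_simps)

lemma alg_final:
  fixes nu nu1 p r1 k k1 t Aa B ss bi bj aij SA D dbji :: real
  assumes "p \<noteq> 0" "1 - k * ss \<noteq> 0" "D = Aa + ss * B" "dbji = t * (Aa * aij + B * bi * bj) + SA/2"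
  shows "nu1 * (2 * t * D * bj) * bi + nu * dbji - 1/2 * (
        ((nu/(p * (1-k * ss))) * p * 2 * r1 * 2 * t * D * bi) * bj + ((nu/(p * (1-k * ss))) * p * 2 * r1 * 2 * t * D * bj) * bi
     + ((nu/(p * (1-k * ss))) * (-(p * 2 * r1 * 2 * t * D * k * bi * bj) - p * 2 * r1 * 2 * t * D * k * bj * bi - p * 2 * r1 * 2 * t * D * (aij - k * bi * bj)
            - p * k1 * 2 * t * D * bi * bj - p * k * (dbji + dbji))) * ss
     + ((nu/(p * (1-k * ss))) * p) * SA)
   = (t * (nu * Aa + (nu/(p * (1-k * ss))) * 2 * r1 * p * D * ss + (nu/(p * (1-k * ss))) * k * p * ss * Aa)/p) * (p * (aij - k * bi * bj))
     + t * (2 * D * nu1 - 4 * D * nu * r1 + nu * D * (ss * k1+k)/(1-k * ss) + nu * B) * bi * bj"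
proof -
  define l0 where "l0 = nu/(p * (1-k * ss))"
  have nu: "nu = l0 * (p * (1-k * ss))" using assms unfolding l0_def by simp
  have e1: "nu * D * (ss * k1+k)/(1-k * ss) = l0 * p * D * (ss * k1+k)" using assms(2) unfolding nu by simp
  have e2: "\<And>X. X/p * (p * Y) = X * Y" for Y using assms(1) by simp
  show ?thesis
    unfolding l0_def[symmetric] e1 e2 unfolding assms(3,4) nu
    by (rule alg_final0)
qed


context
  fixes U :: "(real^'n::finite) set"
    and a :: "real^'n \<Rightarrow> real^'n^'n"
    and b :: "real^'n \<Rightarrow> real^'n"
    and \<tau> :: "real^'n \<Rightarrow> real"
    and k1 k2 k3 :: real
    and \<kappa> \<rho> \<nu> F :: "real \<Rightarrow> real"
    and I :: "real set"
  assumes U: "open U"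
    and a: "riemannian_on U a"
    and b_smooth: "\<forall>i. smooth_on U (\<lambda>x. b x $ i)"
    and bij: "\<forall>x\<in>U. \<forall>i j. cov_deriv a b x i j =
               \<tau> x * ((1 + k1 * sqnorm a b x) * a x $ i $ j
                       + (k3 + k2 * sqnorm a b x) * (b x $ i) * (b x $ j))"
    and I: "open I" "\<forall>x\<in>U. sqnorm a b x \<in> I"
    and fun_smooth: "smooth_real_on I \<kappa>" "smooth_real_on I \<rho>" "smooth_real_on I \<nu>"
    and pos: "\<forall>x\<in>U. 1 - \<kappa> (sqnorm a b x) * sqnorm a b x > 0"
    and dim: "CARD('n) \<ge> 2"
    and Uc: "connected U" "U \<noteq> {}"
    and nz: "\<forall>x\<in>U. \<nu> (sqnorm a b x) \<noteq> 0"
    and den: "\<forall>t\<in>I. 1 + (k1 + k3) * t + k2 * t^2 \<noteq> 0"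
    and F: "\<forall>t\<in>I. (F has_real_derivative
               (k3 + k2 * t) / (2 * (1 + (k1 + k3) * t + k2 * t^2))) (at t)"
begin

lemmas a_sym = a_sym0[OF U a b_smooth] and a_sym' = a_sym_p0[OF U a b_smooth]
  and a_inv = a_inv0[OF U a b_smooth] and a_diff = a_diff0[OF U a b_smooth]
  and b_diff = b_diff0[OF U a b_smooth] and vf_eq = vf_eq0[OF U a b_smooth]
  and sq_eq = sq_eq0[OF U a b_smooth] and sq_diff = sq_diff0[OF U a b_smooth]
  and cov_a = cov_a0[OF U a b_smooth] and da_sym = da_sym0[OF U a b_smooth]
  and ds_formula = ds_formula0[OF U a b_smooth] and vf_def' = vf_def[OF U a b_smooth]

definition Df :: "real \<Rightarrow> real" where
  "Df t = 1 + (k1 + k3) * t + k2 * t^2"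

lemma ds_val: assumes x: "x \<in> U"
  shows "partial k (sqnorm a b) x = 2 * \<tau> x * Df (sqnorm a b x) * b x $ k"
proof -
  let ?v = "vf a b x" and ?s = "sqnorm a b x"
  have bv: "b x $ i = (\<Sum>j\<in>UNIV. a x $ j $ i * ?v $ j)" for i
    using vf_eq[OF x] mv_nth a_sym'[OF x] by (metis (no_types, lifting) sum.cong)
  have s: "?s = (\<Sum>i\<in>UNIV. ?v $ i * b x $ i)" using sq_eq by (simp add: mult.commute)
  have "(\<Sum>i\<in>UNIV. ?v $ i * cov_deriv a b x i k)
     = (\<Sum>i\<in>UNIV. \<tau> x * (1 + k1 * ?s) * (a x $ i $ k * ?v $ i) + \<tau> x * (k3 + k2 * ?s) * b x $ k * (?v $ i * b x $ i))"
    using bij x by (intro sum.cong refl) (simp add: algebra_simps)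
  also have "\<dots> = \<tau> x * (1 + k1 * ?s) * b x $ k + \<tau> x * (k3 + k2 * ?s) * b x $ k * ?s"
    by (simp add: sum.distrib sum_distrib_left[symmetric] bv[symmetric] s[symmetric])
  finally show ?thesis using ds_formula[OF x] unfolding Df_def by (simp add: algebra_simps power2_eq_square)
qed

lemma db_sym: assumes x: "x \<in> U"
  shows "partial i (\<lambda>y. b y $ l) x = partial l (\<lambda>y. b y $ i) x"
proof -
  let ?v = "vf a b x"
  have "(\<Sum>m\<in>UNIV. ?v $ m * (partial l (\<lambda>y. a y $ m $ i) x + partial i (\<lambda>y. a y $ m $ l) x - partial m (\<lambda>y. a y $ l $ i) x))
      = (\<Sum>m\<in>UNIV. ?v $ m * (partial i (\<lambda>y. a y $ m $ l) x + partial l (\<lambda>y. a y $ m $ i) x - partial m (\<lambda>y. a y $ i $ l) x))"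
    using da_sym[OF x] by (intro sum.cong refl) simp
  moreover have "cov_deriv a b x l i = cov_deriv a b x i l"
    using bij x a_sym'[OF x, of l i] by (simp add: mult_ac)
  ultimately show ?thesis using cov_a[OF x, of l i] cov_a[OF x, of i l] by simp
qed

lemma abar_nth: "deformed_metric \<rho> \<kappa> a b y $ i $ j
   = exp (2 * \<rho> (sqnorm a b y)) * (a y $ i $ j - \<kappa> (sqnorm a b y) * b y $ i * b y $ j)"
  unfolding deformed_metric_def by simp

lemma bbar_nth: "deformed_form \<nu> a b y $ i = \<nu> (sqnorm a b y) * b y $ i"
  unfolding deformed_form_def by simp

lemma abar_sym: "transpose (deformed_metric \<rho> \<kappa> a b x) = deformed_metric \<rho> \<kappa> a b x"
  if x: "x \<in> U"
  by (simp add: vec_eq_iff transpose_def abar_nth a_sym'[OF x] mult_ac)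

lemma abar_mv: "(deformed_metric \<rho> \<kappa> a b x *v w) $ i
   = exp (2 * \<rho> (sqnorm a b x)) * ((a x *v w) $ i - \<kappa> (sqnorm a b x) * b x $ i * (b x \<bullet> w))"
  by (simp add: mv_nth abar_nth inner_sum sum_distrib_left sum_subtractf algebra_simps)

lemma abar_inv: assumes x: "x \<in> U" shows "invertible (deformed_metric \<rho> \<kappa> a b x)"
proof (rule inj_invertible)
  fix w assume w: "deformed_metric \<rho> \<kappa> a b x *v w = 0"
  let ?s = "sqnorm a b x" and ?k = "\<kappa> (sqnorm a b x)" and ?c = "b x \<bullet> w"
  have aw: "a x *v w = (?k * ?c) *\<^sub>R b x"
  proof -
    have "(a x *v w) $ i = ((?k * ?c) *\<^sub>R b x) $ i" for i
      using arg_cong[OF w, of "\<lambda>z. z $ i"] abar_mv[of x w i] by simp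
    then show ?thesis by (simp add: vec_eq_iff)
  qed
  have ww: "w = (?k * ?c) *\<^sub>R vf a b x"
  proof -
    have "matrix_inv (a x) *v ((?k * ?c) *\<^sub>R b x) = w" by (rule minv_solve[OF a_inv[OF x] aw])
    then show ?thesis unfolding vf_def' by (simp add: matrix_vector_mult_scaleR)
  qed
  have "?s = b x \<bullet> vf a b x" unfolding sqnorm_def vf_def' by simp
  then have "?c = ?k * ?c * ?s" by (subst ww) (simp)
  then have "?c * (1 - ?k * ?s) = 0" by (simp add: algebra_simps)
  moreover have "1 - ?k * ?s > 0" using pos x by blast
  ultimately have "?c = 0" by simp
  then have "a x *v w = 0" using aw by simp
  then show "w = 0" using minv_solve[OF a_inv[OF x], of w 0] by simp
qed

lemma abar_solve: assumes x: "x \<in> U"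
  shows "deformed_metric \<rho> \<kappa> a b x *v
     ((\<nu> (sqnorm a b x) / (exp (2 * \<rho> (sqnorm a b x)) * (1 - \<kappa> (sqnorm a b x) * sqnorm a b x))) *\<^sub>R vf a b x)
   = deformed_form \<nu> a b x"
proof -
  let ?s = "sqnorm a b x" and ?k = "\<kappa> (sqnorm a b x)" and ?p = "exp (2 * \<rho> (sqnorm a b x))"
  let ?l = "\<nu> ?s / (?p * (1 - ?k * ?s))"
  have s: "b x \<bullet> vf a b x = ?s" unfolding sqnorm_def vf_def' by simp
  have ne: "1 - ?k * ?s \<noteq> 0" using pos x by force
  have "(deformed_metric \<rho> \<kappa> a b x *v (?l *\<^sub>R vf a b x)) $ i = deformed_form \<nu> a b x $ i" for i
  proof -
    have "(deformed_metric \<rho> \<kappa> a b x *v (?l *\<^sub>R vf a b x)) $ i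
        = ?l * (?p * (b x $ i - ?k * b x $ i * ?s))"
      by (simp only: abar_mv matrix_vector_mult_scaleR vf_eq[OF x] vector_scaleR_component
            inner_scaleR_right s real_scaleR_def)
    also have "\<dots> = (?p * ?l * (1 - ?k * ?s)) * b x $ i"
    proof -
      have gen: "l*(p*(c - k*c*t)) = (p*l*(1-k*t))*c" for p l c k t :: real by algebra
      show ?thesis by (rule gen)
    qed
    also have "?p * ?l * (1 - ?k * ?s) = \<nu> ?s" using ne by simp
    finally have "(deformed_metric \<rho> \<kappa> a b x *v (?l *\<^sub>R vf a b x)) $ i = \<nu> ?s * b x $ i" .
    then show ?thesis by (simp add: bbar_nth)
  qed
  then show ?thesis by (simp add: vec_eq_iff)
qed

lemma derivs: assumes x: "x \<in> U"
  shows "(\<kappa> has_real_derivative deriv \<kappa> (sqnorm a b x)) (at (sqnorm a b x))"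
    "(\<rho> has_real_derivative deriv \<rho> (sqnorm a b x)) (at (sqnorm a b x))"
    "(\<nu> has_real_derivative deriv \<nu> (sqnorm a b x)) (at (sqnorm a b x))"
    "((\<lambda>t. exp (2 * \<rho> t)) has_real_derivative exp (2 * \<rho> (sqnorm a b x)) * (2 * deriv \<rho> (sqnorm a b x))) (at (sqnorm a b x))"
proof -
  have s: "sqnorm a b x \<in> I" using I x by blast
  show k: "(\<kappa> has_real_derivative deriv \<kappa> (sqnorm a b x)) (at (sqnorm a b x))"
    by (rule smooth_real_deriv[OF fun_smooth(1) I(1) s])
  show r: "(\<rho> has_real_derivative deriv \<rho> (sqnorm a b x)) (at (sqnorm a b x))"
    by (rule smooth_real_deriv[OF fun_smooth(2) I(1) s])
  show "(\<nu> has_real_derivative deriv \<nu> (sqnorm a b x)) (at (sqnorm a b x))"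
    by (rule smooth_real_deriv[OF fun_smooth(3) I(1) s])
  show "((\<lambda>t. exp (2 * \<rho> t)) has_real_derivative exp (2 * \<rho> (sqnorm a b x)) * (2 * deriv \<rho> (sqnorm a b x))) (at (sqnorm a b x))"
    using r by (auto intro!: derivative_eq_intros)
qed

lemma dabar: assumes x: "x \<in> U"
  shows "partial k (\<lambda>y. deformed_metric \<rho> \<kappa> a b y $ i $ j) x =
    exp (2 * \<rho> (sqnorm a b x)) * (2 * deriv \<rho> (sqnorm a b x)) * partial k (sqnorm a b) x
       * (a x $ i $ j - \<kappa> (sqnorm a b x) * b x $ i * b x $ j)
  + exp (2 * \<rho> (sqnorm a b x)) * (partial k (\<lambda>y. a y $ i $ j) x
       - ((deriv \<kappa> (sqnorm a b x) * partial k (sqnorm a b) x * b x $ i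
           + \<kappa> (sqnorm a b x) * partial k (\<lambda>y. b y $ i) x) * b x $ j
          + \<kappa> (sqnorm a b x) * b x $ i * partial k (\<lambda>y. b y $ j) x))"
proof -
  note d = derivs[OF x]
  have f: "(\<lambda>y. exp (2 * \<rho> (sqnorm a b y))) differentiable (at x)"
    by (rule diff_comp_real[OF sq_diff[OF x] d(4)])
  have kd: "(\<lambda>y. \<kappa> (sqnorm a b y)) differentiable (at x)"
    by (rule diff_comp_real[OF sq_diff[OF x] d(1)])
  have kb: "(\<lambda>y. \<kappa> (sqnorm a b y) * b y $ i) differentiable (at x)"
    by (rule differentiable_mult[OF kd b_diff[OF x]])
  have kbb: "(\<lambda>y. \<kappa> (sqnorm a b y) * b y $ i * b y $ j) differentiable (at x)"
    by (rule differentiable_mult[OF kb b_diff[OF x]])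
  have g: "(\<lambda>y. a y $ i $ j - \<kappa> (sqnorm a b y) * b y $ i * b y $ j) differentiable (at x)"
    by (rule differentiable_diff[OF a_diff[OF x] kbb])
  have "partial k (\<lambda>y. deformed_metric \<rho> \<kappa> a b y $ i $ j) x
     = partial k (\<lambda>y. exp (2 * \<rho> (sqnorm a b y)) * (a y $ i $ j - \<kappa> (sqnorm a b y) * b y $ i * b y $ j)) x"
    by (simp only: abar_nth)
  also have "\<dots> = partial k (\<lambda>y. exp (2 * \<rho> (sqnorm a b y))) x * (a x $ i $ j - \<kappa> (sqnorm a b x) * b x $ i * b x $ j)
     + exp (2 * \<rho> (sqnorm a b x)) * partial k (\<lambda>y. a y $ i $ j - \<kappa> (sqnorm a b y) * b y $ i * b y $ j) x"
    by (rule partial_mult[OF f g])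
  also have "partial k (\<lambda>y. exp (2 * \<rho> (sqnorm a b y))) x
     = exp (2 * \<rho> (sqnorm a b x)) * (2 * deriv \<rho> (sqnorm a b x)) * partial k (sqnorm a b) x"
    by (rule partial_comp[OF sq_diff[OF x] d(4)])
  also have "partial k (\<lambda>y. a y $ i $ j - \<kappa> (sqnorm a b y) * b y $ i * b y $ j) x
     = partial k (\<lambda>y. a y $ i $ j) x - partial k (\<lambda>y. \<kappa> (sqnorm a b y) * b y $ i * b y $ j) x"
    by (rule partial_diff[OF a_diff[OF x] kbb])
  also have "partial k (\<lambda>y. \<kappa> (sqnorm a b y) * b y $ i * b y $ j) x
     = partial k (\<lambda>y. \<kappa> (sqnorm a b y) * b y $ i) x * b x $ j + \<kappa> (sqnorm a b x) * b x $ i * partial k (\<lambda>y. b y $ j) x"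
    by (rule partial_mult[OF kb b_diff[OF x]])
  also have "partial k (\<lambda>y. \<kappa> (sqnorm a b y) * b y $ i) x
     = partial k (\<lambda>y. \<kappa> (sqnorm a b y)) x * b x $ i + \<kappa> (sqnorm a b x) * partial k (\<lambda>y. b y $ i) x"
    by (rule partial_mult[OF kd b_diff[OF x]])
  also have "partial k (\<lambda>y. \<kappa> (sqnorm a b y)) x = deriv \<kappa> (sqnorm a b x) * partial k (sqnorm a b) x"
    by (rule partial_comp[OF sq_diff[OF x] d(1)])
  finally show ?thesis by simp
qed

lemma dbbar: assumes x: "x \<in> U"
  shows "partial j (\<lambda>y. deformed_form \<nu> a b y $ i) x =
    deriv \<nu> (sqnorm a b x) * partial j (sqnorm a b) x * b x $ i + \<nu> (sqnorm a b x) * partial j (\<lambda>y. b y $ i) x"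
proof -
  note d = derivs[OF x]
  have nd: "(\<lambda>y. \<nu> (sqnorm a b y)) differentiable (at x)"
    by (rule diff_comp_real[OF sq_diff[OF x] d(3)])
  have "partial j (\<lambda>y. deformed_form \<nu> a b y $ i) x = partial j (\<lambda>y. \<nu> (sqnorm a b y) * b y $ i) x"
    by (simp only: bbar_nth)
  also have "\<dots> = partial j (\<lambda>y. \<nu> (sqnorm a b y)) x * b x $ i + \<nu> (sqnorm a b x) * partial j (\<lambda>y. b y $ i) x"
    by (rule partial_mult[OF nd b_diff[OF x]])
  also have "partial j (\<lambda>y. \<nu> (sqnorm a b y)) x = deriv \<nu> (sqnorm a b x) * partial j (sqnorm a b) x"
    by (rule partial_comp[OF sq_diff[OF x] d(3)])
  finally show ?thesis .
qed


definition Efun :: "real \<Rightarrow> real" where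
  "Efun t = 2 * Df t * deriv \<nu> t - 4 * Df t * \<nu> t * deriv \<rho> t
      + \<nu> t * Df t * (t * deriv \<kappa> t+\<kappa> t)/(1-\<kappa> t * t) + \<nu> t * (k3+k2 * t)"

definition cfun :: "real^'n \<Rightarrow> real" where
  "cfun x = (let s = sqnorm a b x; p = exp (2  *  \<rho> s) in
     \<tau> x * (\<nu> s * (1 + k1 * s) + (\<nu> s/(p * (1-\<kappa> s * s))) * 2 * deriv \<rho> s * p * Df s * s
       + (\<nu> s/(p * (1-\<kappa> s * s))) * \<kappa> s * p * s * (1 + k1 * s))/p)"

lemma covbar: assumes x: "x \<in> U"
  shows "cov_deriv (deformed_metric \<rho> \<kappa> a b) (deformed_form \<nu> a b) x i j
   = cfun x * deformed_metric \<rho> \<kappa> a b x $ i $ j + \<tau> x * Efun (sqnorm a b x) * b x $ i * b x $ j"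
proof -
  let ?s = "sqnorm a b x" and ?k = "\<kappa> (sqnorm a b x)" and ?p = "exp (2 * \<rho> (sqnorm a b x))"
  let ?l = "\<nu> ?s / (?p * (1 - ?k * ?s))" and ?v = "vf a b x"
  let ?T = "\<lambda>k i j. partial k (\<lambda>y. deformed_metric \<rho> \<kappa> a b y $ i $ j) x"
  let ?G = "\<lambda>l. partial i (\<lambda>y. a y $ l $ j) x + partial j (\<lambda>y. a y $ l $ i) x - partial l (\<lambda>y. a y $ i $ j) x"
  let ?t = "\<tau> x" and ?D = "Df ?s" and ?r1 = "deriv \<rho> ?s" and ?k1 = "deriv \<kappa> ?s"
  let ?bi = "b x $ i" and ?bj = "b x $ j"
  let ?dbij = "partial i (\<lambda>y. b y $ j) x" and ?dbji = "partial j (\<lambda>y. b y $ i) x"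
  let ?c1 = "?l*?p*2*?r1*2*?t*?D*?bi" and ?c2 = "?l*?p*2*?r1*2*?t*?D*?bj"
  let ?c3 = "?l*(-(?p*2*?r1*2*?t*?D*?k*?bi*?bj) - ?p*2*?r1*2*?t*?D*?k*?bj*?bi - ?p*2*?r1*2*?t*?D*(a x $ i $ j - ?k*?bi*?bj)
            - ?p*?k1*2*?t*?D*?bi*?bj - ?p*?k*(?dbij + ?dbji))"
  let ?c4 = "?l*?p"
  have ce: "cov_deriv (deformed_metric \<rho> \<kappa> a b) (deformed_form \<nu> a b) x i j
     = partial j (\<lambda>y. deformed_form \<nu> a b y $ i) x
       - (1/2) * (\<Sum>l\<in>UNIV. (?l *\<^sub>R ?v) $ l * (?T i l j + ?T j l i - ?T l i j))"
    by (rule cov_expand[of "deformed_metric \<rho> \<kappa> a b" x "?l *\<^sub>R ?v" "deformed_form \<nu> a b",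
          OF abar_sym[OF x] abar_inv[OF x] abar_solve[OF x]])
  have summ: "(?l *\<^sub>R ?v) $ l * (?T i l j + ?T j l i - ?T l i j)
     = ?c1 * (?v $ l * a x $ l $ j) + ?c2 * (?v $ l * a x $ l $ i) + ?c3 * (?v $ l * b x $ l) + ?c4 * (?v $ l * ?G l)" for l
    unfolding vector_scaleR_component real_scaleR_def dabar[OF x] ds_val[OF x] db_sym[OF x, of i l] db_sym[OF x, of j l]
    by (rule alg_summand)
  have bv: "b x $ m = (\<Sum>l\<in>UNIV. ?v $ l * a x $ l $ m)" for m
    using vf_eq[OF x] mv_nth a_sym'[OF x] by (metis (no_types, lifting) mult.commute sum.cong)
  have s: "?s = (\<Sum>l\<in>UNIV. ?v $ l * b x $ l)" using sq_eq by (simp add: mult.commute)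
  have sum: "(\<Sum>l\<in>UNIV. (?l *\<^sub>R ?v) $ l * (?T i l j + ?T j l i - ?T l i j))
     = ?c1 * ?bj + ?c2 * ?bi + ?c3 * ?s + ?c4 * (\<Sum>l\<in>UNIV. ?v $ l * ?G l)"
    unfolding summ by (simp only: sum.distrib sum_distrib_left[symmetric] bv[symmetric] s[symmetric])
  have dbji: "?dbji = ?t*((1 + k1*?s)*a x $ i $ j + (k3 + k2*?s)*?bi*?bj) + (\<Sum>l\<in>UNIV. ?v $ l * ?G l)/2"
    using cov_a[OF x, of i j] bij x by simp
  have dbij: "?dbij = ?dbji" by (rule db_sym[OF x])
  have p0: "?p \<noteq> 0" by simp
  have k0: "1 - ?k * ?s \<noteq> 0" using pos x by force
  have D: "?D = (1 + k1*?s) + ?s*(k3 + k2*?s)" unfolding Df_def by (simp add: algebra_simps power2_eq_square)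
  have "cov_deriv (deformed_metric \<rho> \<kappa> a b) (deformed_form \<nu> a b) x i j
     = deriv \<nu> ?s * (2 * ?t * ?D * ?bj) * ?bi + \<nu> ?s * ?dbji - 1/2 * (?c1 * ?bj + ?c2 * ?bi + ?c3 * ?s + ?c4 * (\<Sum>l\<in>UNIV. ?v $ l * ?G l))"
    unfolding ce sum dbbar[OF x] ds_val[OF x] by (simp add: mult.assoc)
  also have "\<dots> = (?t*(\<nu> ?s*(1 + k1*?s) + ?l*2*?r1*?p*?D*?s + ?l*?k*?p*?s*(1 + k1*?s))/?p)*(?p*(a x $ i $ j - ?k*?bi*?bj))
     + ?t*(2*?D*deriv \<nu> ?s - 4*?D*\<nu> ?s*?r1 + \<nu> ?s*?D*(?s*?k1+?k)/(1-?k*?s) + \<nu> ?s*(k3 + k2*?s))*?bi*?bj"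
    unfolding dbij by (rule alg_final[OF p0 k0 D dbji])
  also have "\<dots> = cfun x * deformed_metric \<rho> \<kappa> a b x $ i $ j + \<tau> x * Efun (sqnorm a b x) * b x $ i * b x $ j"
    unfolding cfun_def Efun_def abar_nth Let_def by (simp add: mult.assoc add.commute)
  finally show ?thesis .
qed

definition Gf :: "real \<Rightarrow> real" where
  "Gf t = exp (- (2 * \<rho> t)) * exp (F t) / sqrt (1 - t * \<kappa> t)"

definition qf :: "real \<Rightarrow> real" where
  "qf t = \<nu> t * Gf t"

lemma G_deriv: assumes t: "t \<in> I" and p: "1 - t * \<kappa> t > 0"
  shows "(Gf has_real_derivative Gf t * ((k3 + k2 * t) / (2 * Df t) - 2 * deriv \<rho> t
      + (\<kappa> t + t * deriv \<kappa> t) / (2 * (1 - t * \<kappa> t)))) (at t)"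
proof -
  have k: "(\<kappa> has_real_derivative deriv \<kappa> t) (at t)" by (rule smooth_real_deriv[OF fun_smooth(1) I(1) t])
  have r: "(\<rho> has_real_derivative deriv \<rho> t) (at t)" by (rule smooth_real_deriv[OF fun_smooth(2) I(1) t])
  have f: "(F has_real_derivative (k3 + k2 * t) / (2 * Df t)) (at t)" using F t unfolding Df_def by blast
  have D: "Df t \<noteq> 0" using den t unfolding Df_def by blast
  have sq: "sqrt (1 - t * \<kappa> t) * (sqrt (1 - t * \<kappa> t) * y) = (1 - t * \<kappa> t) * y" for y
    using p by (simp add: mult.assoc[symmetric])
  show ?thesis unfolding Gf_def[abs_def]
    using k r f p D by (auto intro!: derivative_eq_intros simp: field_simps sq)
qed

lemma q_deriv: assumes t: "t \<in> I" and p: "1 - t * \<kappa> t > 0"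
  shows "(qf has_real_derivative Gf t * Efun t / (2 * Df t)) (at t)"
proof -
  have n: "(\<nu> has_real_derivative deriv \<nu> t) (at t)" by (rule smooth_real_deriv[OF fun_smooth(3) I(1) t])
  have D: "Df t \<noteq> 0" using den t unfolding Df_def by blast
  have p': "1 - \<kappa> t * t \<noteq> 0" using p by (simp add: mult.commute)
  have "(qf has_real_derivative deriv \<nu> t * Gf t + \<nu> t * (Gf t * ((k3 + k2 * t) / (2 * Df t) - 2 * deriv \<rho> t
      + (\<kappa> t + t * deriv \<kappa> t) / (2 * (1 - t * \<kappa> t))))) (at t)"
    using DERIV_mult[OF n G_deriv[OF t p]] unfolding qf_def[abs_def] by (simp add: mult_ac)
  moreover have "deriv \<nu> t * Gf t + \<nu> t * (Gf t * ((k3 + k2 * t) / (2 * Df t) - 2 * deriv \<rho> t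
      + (\<kappa> t + t * deriv \<kappa> t) / (2 * (1 - t * \<kappa> t)))) = Gf t * Efun t / (2 * Df t)"
    unfolding Efun_def using D p p' by (simp add: field_simps)
  ultimately show ?thesis by simp
qed

lemma G_pos: "1 - t * \<kappa> t > 0 \<Longrightarrow> Gf t > 0"
  unfolding Gf_def by simp

lemma partial_q: assumes x: "x \<in> U"
  shows "partial k (\<lambda>y. qf (sqnorm a b y)) x = Gf (sqnorm a b x) * \<tau> x * Efun (sqnorm a b x) * b x $ k"
    "(\<lambda>y. qf (sqnorm a b y)) differentiable (at x)"
proof -
  let ?s = "sqnorm a b x"
  have t: "?s \<in> I" using I x by blast
  have p: "1 - ?s * \<kappa> ?s > 0" using pos x by (simp add: mult.commute)
  have D: "Df ?s \<noteq> 0" using den t unfolding Df_def by blast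
  note qd = q_deriv[OF t p]
  show "(\<lambda>y. qf (sqnorm a b y)) differentiable (at x)" by (rule diff_comp_real[OF sq_diff[OF x] qd])
  have "partial k (\<lambda>y. qf (sqnorm a b y)) x = Gf ?s * Efun ?s / (2 * Df ?s) * partial k (sqnorm a b) x"
    by (rule partial_comp[OF sq_diff[OF x] qd])
  also have "\<dots> = Gf ?s * \<tau> x * Efun ?s * b x $ k" unfolding ds_val[OF x] using D by simp
  finally show "partial k (\<lambda>y. qf (sqnorm a b y)) x = Gf (sqnorm a b x) * \<tau> x * Efun (sqnorm a b x) * b x $ k" .
qed

lemma orth_vec: "\<exists>u::real^'n. u \<noteq> 0 \<and> bv \<bullet> u = 0"
proof (cases "bv = 0")
  case True
  then show ?thesis by (intro exI[of _ "axis undefined 1"]) (simp add: axis_eq_0_iff)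
next
  case False
  then obtain i where i: "bv $ i \<noteq> 0" by (auto simp: vec_eq_iff)
  have "\<exists>j. j \<noteq> i"
  proof (rule ccontr)
    assume "\<not> (\<exists>j. j \<noteq> i)"
    then have "UNIV = {i}" by auto
    then have "CARD('n) = card {i}" by (simp only:)
    then have "CARD('n) = 1" by simp
    then show False using dim by simp
  qed
  then obtain j where j: "j \<noteq> i" by blast
  let ?u = "axis i (bv $ j) - axis j (bv $ i)"
  have "?u $ j = - bv $ i" using j by (simp add: axis_def)
  then have "?u \<noteq> 0" using i by auto
  moreover have "bv \<bullet> ?u = 0" using j by (simp add: inner_diff_right inner_axis mult.commute)
  ultimately show ?thesis by blast
qed

lemma q_iff: assumes x: "x \<in> U"
  shows "\<nu> (sqnorm a b x) = C * sqrt (1 - sqnorm a b x * \<kappa> (sqnorm a b x))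
                 * exp (2 * \<rho> (sqnorm a b x)) * exp (- F (sqnorm a b x))
     \<longleftrightarrow> qf (sqnorm a b x) = C"
proof -
  let ?s = "sqnorm a b x"
  have p: "sqrt (1 - ?s * \<kappa> ?s) > 0" using pos x by (simp add: mult.commute)
  have "qf ?s = \<nu> ?s / (sqrt (1 - ?s * \<kappa> ?s) * exp (2 * \<rho> ?s) * exp (- F ?s))"
    unfolding qf_def Gf_def by (simp add: exp_minus field_simps)
  then show ?thesis using p by (auto simp: field_simps)
qed

lemma tauE: assumes x: "x \<in> U"
  and c: "\<forall>i j. cov_deriv (deformed_metric \<rho> \<kappa> a b) (deformed_form \<nu> a b) x i j = c * deformed_metric \<rho> \<kappa> a b x $ i $ j"
  shows "\<tau> x * Efun (sqnorm a b x) * b x $ k = 0"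
proof -
  let ?A = "deformed_metric \<rho> \<kappa> a b x" and ?M = "\<tau> x * Efun (sqnorm a b x)"
  let ?d = "c - cfun x"
  have h: "?d * ?A $ i $ j = ?M * b x $ i * b x $ j" for i j
    using c covbar[OF x, of i j] by (simp add: algebra_simps)
  obtain u :: "real^'n" where u: "u \<noteq> 0" "b x \<bullet> u = 0" using orth_vec by blast
  have "(\<Sum>i\<in>UNIV. u $ i * (\<Sum>j\<in>UNIV. (?d * ?A $ i $ j) * u $ j))
      = (\<Sum>i\<in>UNIV. u $ i * (\<Sum>j\<in>UNIV. (?M * b x $ i * b x $ j) * u $ j))"
    using h by simp
  also have "\<dots> = ?M * (b x \<bullet> u) * (b x \<bullet> u)"
    by (simp add: inner_sum sum_distrib_left sum_distrib_right mult_ac)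
  also have "\<dots> = 0" using u by simp
  finally have z: "(\<Sum>i\<in>UNIV. u $ i * (\<Sum>j\<in>UNIV. (?d * ?A $ i $ j) * u $ j)) = 0" .
  have "(\<Sum>i\<in>UNIV. u $ i * (\<Sum>j\<in>UNIV. (?d * ?A $ i $ j) * u $ j)) = ?d * (u \<bullet> (?A *v u))"
    by (simp add: inner_sum mv_nth sum_distrib_left mult_ac)
  also have "u \<bullet> (?A *v u) = exp (2 * \<rho> (sqnorm a b x)) * (u \<bullet> (a x *v u))"
    using u(2) by (simp add: inner_sum abar_mv sum_distrib_left mult_ac)
  finally have "?d * (exp (2 * \<rho> (sqnorm a b x)) * (u \<bullet> (a x *v u))) = 0" using z by simp
  moreover have "u \<bullet> (a x *v u) > 0" using a x u(1) unfolding riemannian_on_def by blast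
  ultimately have d0: "?d = 0" by simp
  have "?M * b x $ k * b x $ k = 0" using h[of k k] d0 by simp
  then show ?thesis by simp
qed

lemma const_partials:
  fixes f :: "real^'n \<Rightarrow> real"
  assumes "\<forall>x\<in>U. f differentiable (at x) \<and> (\<forall>k. partial k f x = 0)"
  shows "\<exists>C. \<forall>x\<in>U. f x = C"
proof -
  have hd: "(f has_derivative (\<lambda>h. 0)) (at x)" if x: "x \<in> U" for x
  proof -
    obtain f' where f': "(f has_derivative f') (at x)" "\<And>k. partial k f x = f' (axis k 1)"
      using assms x partial_diff_ex by metis
    have l: "bounded_linear f'" using f'(1) has_derivative_bounded_linear by blast
    have "f' h = 0" for h
    proof -
      have "f' h = f' (\<Sum>i\<in>UNIV. h $ i *\<^sub>R axis i 1)"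
        using basis_expansion[of h] by (simp add: scalar_mult_eq_scaleR)
      also have "\<dots> = (\<Sum>i\<in>UNIV. h $ i * f' (axis i 1))"
        using l by (simp add: linear_simps real_vector.linear_sum[OF bounded_linear.linear[OF l]])
      also have "\<dots> = 0" using f'(2) assms x by simp
      finally show ?thesis .
    qed
    then have "f' = (\<lambda>h. 0)" by auto
    then show ?thesis using f'(1) by simp
  qed
  have "continuous_on U f"
    using assms differentiable_imp_continuous_within continuous_at_imp_continuous_on by blast
  moreover have "\<forall>x\<in>U - {}. (f has_derivative (\<lambda>h. 0)) (at x within U)"
    using hd has_derivative_at_withinI by blast
  ultimately have "f constant_on U"
    using has_derivative_zero_connected_constant_on[OF Uc(1) U, of "{}"] by simp
  then show ?thesis unfolding constant_on_def by blast
qed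

lemma main:
  "closed_conformal_on U (deformed_metric \<rho> \<kappa> a b) (deformed_form \<nu> a b)
     \<longleftrightarrow> (\<exists>C::real. C \<noteq> 0 \<and> (\<forall>x\<in>U.
            \<nu> (sqnorm a b x) = C * sqrt (1 - sqnorm a b x * \<kappa> (sqnorm a b x))
                 * exp (2 * \<rho> (sqnorm a b x)) * exp (- F (sqnorm a b x))))"
proof
  assume "closed_conformal_on U (deformed_metric \<rho> \<kappa> a b) (deformed_form \<nu> a b)"
  then obtain c where c: "\<forall>x\<in>U. \<forall>i j. cov_deriv (deformed_metric \<rho> \<kappa> a b) (deformed_form \<nu> a b) x i j
      = c x * deformed_metric \<rho> \<kappa> a b x $ i $ j"
    unfolding closed_conformal_on_def by blast
  have "\<forall>x\<in>U. (\<lambda>y. qf (sqnorm a b y)) differentiable (at x) \<and> (\<forall>k. partial k (\<lambda>y. qf (sqnorm a b y)) x = 0)"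
  proof
    fix x assume x: "x \<in> U"
    show "(\<lambda>y. qf (sqnorm a b y)) differentiable (at x) \<and> (\<forall>k. partial k (\<lambda>y. qf (sqnorm a b y)) x = 0)"
      using partial_q[OF x] tauE[OF x, of "c x"] c x by simp
  qed
  then obtain C where C: "\<forall>x\<in>U. qf (sqnorm a b x) = C" using const_partials by blast
  obtain x0 where x0: "x0 \<in> U" using Uc(2) by blast
  have "1 - sqnorm a b x0 * \<kappa> (sqnorm a b x0) > 0" using pos x0 by (simp add: mult.commute)
  then have "Gf (sqnorm a b x0) > 0" by (rule G_pos)
  then have "qf (sqnorm a b x0) \<noteq> 0"
    using nz x0 unfolding qf_def by simp
  then have "C \<noteq> 0" using C x0 by simp
  then show "\<exists>C::real. C \<noteq> 0 \<and> (\<forall>x\<in>U.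
            \<nu> (sqnorm a b x) = C * sqrt (1 - sqnorm a b x * \<kappa> (sqnorm a b x))
                 * exp (2 * \<rho> (sqnorm a b x)) * exp (- F (sqnorm a b x)))"
    using C q_iff by blast
next
  assume "\<exists>C::real. C \<noteq> 0 \<and> (\<forall>x\<in>U.
            \<nu> (sqnorm a b x) = C * sqrt (1 - sqnorm a b x * \<kappa> (sqnorm a b x))
                 * exp (2 * \<rho> (sqnorm a b x)) * exp (- F (sqnorm a b x)))"
  then obtain C where C: "\<forall>x\<in>U. qf (sqnorm a b x) = C" using q_iff by blast
  have "cov_deriv (deformed_metric \<rho> \<kappa> a b) (deformed_form \<nu> a b) x i j
      = cfun x * deformed_metric \<rho> \<kappa> a b x $ i $ j" if x: "x \<in> U" for x i j
  proof -
    have "partial i (\<lambda>y. qf (sqnorm a b y)) x = partial i (\<lambda>y. C) x"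
      by (rule partial_cong[OF U x]) (use C in simp)
    then have "Gf (sqnorm a b x) * (\<tau> x * Efun (sqnorm a b x) * b x $ i) = 0"
      using partial_q(1)[OF x, of i] partial_const[of i C x] by (simp add: mult_ac)
    moreover have "Gf (sqnorm a b x) > 0" using G_pos pos x by (simp add: mult.commute)
    ultimately have "\<tau> x * Efun (sqnorm a b x) * b x $ i = 0" by simp
    then show ?thesis using covbar[OF x, of i j] by simp
  qed
  then show "closed_conformal_on U (deformed_metric \<rho> \<kappa> a b) (deformed_form \<nu> a b)"
    unfolding closed_conformal_on_def by blast
qed

end

theorem proposition3p1:
  fixes U :: "(real^'n) set"
    and a :: "real^'n \<Rightarrow> real^'n^'n"
    and b :: "real^'n \<Rightarrow> real^'n"
    and \<tau> :: "real^'n \<Rightarrow> real"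
    and k1 k2 k3 :: real
    and \<kappa> \<rho> \<nu> F :: "real \<Rightarrow> real"
    and I :: "real set"
  assumes dim: "CARD('n) \<ge> 2"
    and U: "open U" "connected U" "U \<noteq> {}"
    and a: "riemannian_on U a"
    and b_smooth: "\<forall>i. smooth_on U (\<lambda>x. b x $ i)"
    and bij: "\<forall>x\<in>U. \<forall>i j. cov_deriv a b x i j =
               \<tau> x * ((1 + k1 * sqnorm a b x) * a x $ i $ j
                       + (k3 + k2 * sqnorm a b x) * (b x $ i) * (b x $ j))"
    and I: "open I" "is_interval I" "\<forall>x\<in>U. sqnorm a b x \<in> I"
    and fun_smooth: "smooth_real_on I \<kappa>" "smooth_real_on I \<rho>" "smooth_real_on I \<nu>"
    and pos: "\<forall>x\<in>U. 1 - \<kappa> (sqnorm a b x) * sqnorm a b x > 0"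
    and nz: "\<forall>x\<in>U. \<nu> (sqnorm a b x) \<noteq> 0"
    and den: "\<forall>t\<in>I. 1 + (k1 + k3) * t + k2 * t^2 \<noteq> 0"
    and F: "\<forall>t\<in>I. (F has_real_derivative
               (k3 + k2 * t) / (2 * (1 + (k1 + k3) * t + k2 * t^2))) (at t)"
  shows "closed_conformal_on U (deformed_metric \<rho> \<kappa> a b) (deformed_form \<nu> a b)
     \<longleftrightarrow> (\<exists>C::real. C \<noteq> 0 \<and> (\<forall>x\<in>U.
            \<nu> (sqnorm a b x) = C * sqrt (1 - sqnorm a b x * \<kappa> (sqnorm a b x))
                 * exp (2 * \<rho> (sqnorm a b x)) * exp (- F (sqnorm a b x))))"
  using main[OF U(1) a b_smooth bij I(1) I(3) fun_smooth pos dim U(2) U(3) nz den F] .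

end
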